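(* Let $J=\{1,\ldots,n\}$ be a finite set of jobs to be processed on a single machine with preemption allowed, where job $i$ has a release time $r_i\ge 0$ and a processing requirement $p_i>0$. Let $S=[s_1,\ldots,s_n]$ be an ordering of $J$ (a completion sequence). Let $\omega$ be any schedule that has completion sequence $S$, i.e. $C_{s_i,\omega}\le C_{s_j,\omega}$ for all $i<j$. Define the schedule $\mathrm{Pri}_S$ by $\mathrm{Pri}_S(i,t)=1$ if $i$ is the first pending job at time $t$ to appear in $S$, and $\mathrm{Pri}_S(i,t)=0$ otherwise. Then $\mathrm{Pri}_S$ dominates $\omega$: for every job $i\in J$, $C_{i,\mathrm{Pri}_S}\le C_{i,\omega}$.
   Context: A schedule is a function $\omega(i,t)\in[0,1]$ giving the fraction of the single machine's resources allocated to job $i$ at time $t$, with $\sum_i \omega(i,t)\le 1$ for all $t$, $\omega(i,t)=0$ for $t<r_i$. Job $i$ is completed under $\omega$ at the time $C_{i,\omega}$ at which $\int_{r_i}^{C_{i,\omega}}\omega(i,t)\,dt=p_i$. A job is pending at time $t$ if it has been released ($t\ge r_i$) and not yet completed. Schedule $\omega$ dominates schedule $\omega'$ if $C_{i,\omega}\le C_{i,\omega'}$ for every job $i$. *)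

theory Defs
  imports "HOL-Analysis.Analysis"
begin

definition is_schedule :: "'a set \<Rightarrow> ('a \<Rightarrow> real) \<Rightarrow> ('a \<Rightarrow> real \<Rightarrow> real) \<Rightarrow> bool" where
  "is_schedule J r w \<longleftrightarrow>
     (\<forall>i\<in>J. \<forall>t. 0 \<le> w i t \<and> w i t \<le> 1) \<and>
     (\<forall>t. (\<Sum>i\<in>J. w i t) \<le> 1) \<and>
     (\<forall>i\<in>J. \<forall>t. t < r i \<longrightarrow> w i t = 0) \<and>
     (\<forall>i\<in>J. \<forall>a b. (w i) integrable_on {a..b})"

definition work :: "('a \<Rightarrow> real) \<Rightarrow> ('a \<Rightarrow> real \<Rightarrow> real) \<Rightarrow> 'a \<Rightarrow> real \<Rightarrow> real" where
  "work r w i t = integral {r i..t} (w i)"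

definition completion_time ::
  "('a \<Rightarrow> real) \<Rightarrow> ('a \<Rightarrow> real) \<Rightarrow> ('a \<Rightarrow> real \<Rightarrow> real) \<Rightarrow> 'a \<Rightarrow> real" where
  "completion_time r p w i = Inf {t. r i \<le> t \<and> work r w i t = p i}"

definition completes :: "('a \<Rightarrow> real) \<Rightarrow> ('a \<Rightarrow> real) \<Rightarrow> ('a \<Rightarrow> real \<Rightarrow> real) \<Rightarrow> 'a \<Rightarrow> bool" where
  "completes r p w i \<longleftrightarrow> (\<exists>t. r i \<le> t \<and> work r w i t = p i)"

definition pending :: "('a \<Rightarrow> real) \<Rightarrow> ('a \<Rightarrow> real) \<Rightarrow> ('a \<Rightarrow> real \<Rightarrow> real) \<Rightarrow> 'a \<Rightarrow> real \<Rightarrow> bool" where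
  "pending r p w i t \<longleftrightarrow> r i \<le> t \<and> work r w i t < p i"

definition first_pending ::
  "'a list \<Rightarrow> ('a \<Rightarrow> real) \<Rightarrow> ('a \<Rightarrow> real) \<Rightarrow> ('a \<Rightarrow> real \<Rightarrow> real) \<Rightarrow> 'a \<Rightarrow> real \<Rightarrow> bool" where
  "first_pending S r p w i t \<longleftrightarrow>
     (\<exists>k<length S. S ! k = i \<and> pending r p w i t \<and>
        (\<forall>k'<k. \<not> pending r p w (S ! k') t))"

text \<open>w is the schedule Pri_S (a self-referential definition, since pending refers to w).\<close>
definition is_Pri ::
  "'a set \<Rightarrow> 'a list \<Rightarrow> ('a \<Rightarrow> real) \<Rightarrow> ('a \<Rightarrow> real) \<Rightarrow> ('a \<Rightarrow> real \<Rightarrow> real) \<Rightarrow> bool" where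
  "is_Pri J S r p w \<longleftrightarrow> is_schedule J r w \<and>
     (\<forall>i t. w i t = (if first_pending S r p w i t then 1 else 0))"

definition has_completion_sequence ::
  "'a list \<Rightarrow> ('a \<Rightarrow> real) \<Rightarrow> ('a \<Rightarrow> real) \<Rightarrow> ('a \<Rightarrow> real \<Rightarrow> real) \<Rightarrow> bool" where
  "has_completion_sequence S r p w \<longleftrightarrow>
     (\<forall>a b. a < b \<and> b < length S \<longrightarrow>
        completion_time r p w (S ! a) \<le> completion_time r p w (S ! b))"

end

theory Submission
  imports Defs
begin

lemma int_empty: "b \<le> (a::real) \<Longrightarrow> integral {a..b} f = 0"
  by (metis box_real(2) content_real_eq_0 integral_null)

lemma int_zero_on:
  fixes f :: "real \<Rightarrow> real"
  assumes "\<And>x. x < r \<Longrightarrow> f x = 0" "s \<le> r"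
  shows "integral {m..s} f = 0"
proof -
  have "integral {m..s} f = integral {m..s} (\<lambda>_. 0::real)"
    by (rule integral_spike[of "{r}"]) (use assms in auto)
  then show ?thesis by simp
qed

lemma int_shift:
  fixes f :: "real \<Rightarrow> real"
  assumes z: "\<And>x. x < r \<Longrightarrow> f x = 0" and i: "\<And>a b. f integrable_on {a..b}"
    and "m \<le> r" "m \<le> s"
  shows "integral {r..s} f = integral {m..s} f"
proof (cases "s \<le> r")
  case True
  then show ?thesis using int_empty[OF True] int_zero_on[OF z True] by simp
next
  case False
  have "integral {m..r} f + integral {r..s} f = integral {m..s} f"
    by (rule Henstock_Kurzweil_Integration.integral_combine) (use assms False i in auto)
  moreover have "integral {m..r} f = 0" by (rule int_zero_on[of r f]) (use z in auto)
  ultimately show ?thesis by simp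
qed

lemma int_diff:
  fixes f :: "real \<Rightarrow> real"
  assumes z: "\<And>x. x < r \<Longrightarrow> f x = 0" and i: "\<And>a b. f integrable_on {a..b}"
    and "u \<le> t"
  shows "integral {r..t} f - integral {r..u} f = integral {u..t} f"
proof -
  define m where "m = min u r"
  have "integral {r..t} f = integral {m..t} f" "integral {r..u} f = integral {m..u} f"
    using int_shift[OF z i] assms by (auto simp: m_def)
  moreover have "integral {m..u} f + integral {u..t} f = integral {m..t} f"
    by (rule Henstock_Kurzweil_Integration.integral_combine) (use assms i in \<open>auto simp: m_def\<close>)
  ultimately show ?thesis by simp
qed

lemma int_nonneg:
  fixes f :: "real \<Rightarrow> real"
  assumes "\<And>x. 0 \<le> f x" "\<And>a b. f integrable_on {a..b}"
  shows "0 \<le> integral {a..b} f"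
  by (rule integral_nonneg) (use assms in auto)

lemma int_mono:
  fixes f :: "real \<Rightarrow> real"
  assumes z: "\<And>x. x < r \<Longrightarrow> f x = 0" and i: "\<And>a b. f integrable_on {a..b}"
    and n: "\<And>x. 0 \<le> f x" and "u \<le> t"
  shows "integral {r..u} f \<le> integral {r..t} f"
  using int_diff[of r f, OF z i \<open>u \<le> t\<close>] int_nonneg[OF n i, of u t] by simp

lemma int_cont:
  fixes f :: "real \<Rightarrow> real"
  assumes z: "\<And>x. x < r \<Longrightarrow> f x = 0" and i: "\<And>a b. f integrable_on {a..b}"
    and "m \<le> r"
  shows "continuous_on {m..t} (\<lambda>s. integral {r..s} f)"
proof -
  have "continuous_on {m..t} (\<lambda>s. integral {m..s} f)"
    by (rule indefinite_integral_continuous_1[OF i])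
  then show ?thesis
    by (rule continuous_on_cong[THEN iffD1, rotated 2]) (use int_shift[OF z i \<open>m \<le> r\<close>] in auto)
qed

lemma int_mono_gen:
  fixes f :: "real \<Rightarrow> real"
  assumes n: "\<And>x. 0 \<le> f x" and i: "\<And>a b. f integrable_on {a..b}" and "u \<le> t"
  shows "integral {a..u} f \<le> integral {a..t} f"
proof (cases "a \<le> u")
  case True
  show ?thesis by (rule integral_subset_le) (use assms True in auto)
next
  case False
  then show ?thesis using int_empty[of u a f] int_nonneg[OF n i, of a t] by simp
qed

lemma borel_indicator_integrable:
  assumes "E \<in> sets borel"
  shows "(indicator E :: real \<Rightarrow> real) integrable_on {a..b}"
proof -
  have "sets borel \<subseteq> sets lebesgue" by force
  then have "E \<inter> {a..b} \<in> sets lebesgue" using assms by auto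
  then have "E \<inter> {a..b} \<in> lmeasurable"
    by (intro bounded_set_imp_lmeasurable) (auto intro: bounded_subset[OF bounded_closed_interval])
  then show ?thesis by (simp add: integrable_on_indicator)
qed

definition pri_ok :: "'a list \<Rightarrow> ('a \<Rightarrow> real) \<Rightarrow> ('a \<Rightarrow> real) \<Rightarrow> ('a \<Rightarrow> real \<Rightarrow> real) \<Rightarrow> bool" where
  "pri_ok S r p \<sigma> \<longleftrightarrow> (\<forall>i t. \<sigma> i t = (if first_pending S r p \<sigma> i t then 1 else 0)) \<and>
     (\<forall>i a b. \<sigma> i integrable_on {a..b})"

lemma fp_snoc_other:
  assumes "i \<noteq> y" "\<forall>j. j \<noteq> y \<longrightarrow> pending r p \<sigma> j t = pending r p \<sigma>' j t" "y \<notin> set S'"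
  shows "first_pending (S'@[y]) r p \<sigma> i t = first_pending S' r p \<sigma>' i t"
proof
  assume "first_pending (S'@[y]) r p \<sigma> i t"
  then obtain k where k: "k < length (S'@[y])" "(S'@[y]) ! k = i" "pending r p \<sigma> i t"
     "\<forall>k'<k. \<not> pending r p \<sigma> ((S'@[y]) ! k') t" unfolding first_pending_def by blast
  have kl: "k < length S'" using k assms(1) by (auto simp: nth_append split: if_splits)
  have "\<forall>k'<k. \<not> pending r p \<sigma>' (S' ! k') t"
  proof (intro allI impI)
    fix k' assume "k' < k"
    then have "S' ! k' \<noteq> y" "S' ! k' = (S'@[y]) ! k'" using kl assms(3) nth_mem
      by (fastforce simp: nth_append)+
    then show "\<not> pending r p \<sigma>' (S' ! k') t" using k(4) \<open>k' < k\<close> assms(2) by metis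
  qed
  then show "first_pending S' r p \<sigma>' i t" unfolding first_pending_def
    using k kl assms by (auto simp: nth_append)
next
  assume "first_pending S' r p \<sigma>' i t"
  then obtain k where k: "k < length S'" "S' ! k = i" "pending r p \<sigma>' i t"
     "\<forall>k'<k. \<not> pending r p \<sigma>' (S' ! k') t" unfolding first_pending_def by blast
  have "\<forall>k'<k. \<not> pending r p \<sigma> ((S'@[y]) ! k') t"
  proof (intro allI impI)
    fix k' assume "k' < k"
    then have "S' ! k' \<noteq> y" "S' ! k' = (S'@[y]) ! k'" using k(1) assms(3) nth_mem
      by (fastforce simp: nth_append)+
    then show "\<not> pending r p \<sigma> ((S'@[y]) ! k') t" using k(4) \<open>k' < k\<close> assms(2) by metis
  qed
  then show "first_pending (S'@[y]) r p \<sigma> i t" unfolding first_pending_def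
    using k assms by (auto simp: nth_append intro!: exI[of _ k])
qed

lemma fp_snoc_last:
  assumes "\<forall>j. j \<noteq> y \<longrightarrow> pending r p \<sigma> j t = pending r p \<sigma>' j t" "y \<notin> set S'"
  shows "first_pending (S'@[y]) r p \<sigma> y t =
     (pending r p \<sigma> y t \<and> (\<forall>k<length S'. \<not> pending r p \<sigma>' (S' ! k) t))"
proof
  assume "first_pending (S'@[y]) r p \<sigma> y t"
  then obtain k where k: "k < length (S'@[y])" "(S'@[y]) ! k = y" "pending r p \<sigma> y t"
     "\<forall>k'<k. \<not> pending r p \<sigma> ((S'@[y]) ! k') t" unfolding first_pending_def by blast
  have kl: "k = length S'" using k assms(2) nth_mem
    by (fastforce simp: nth_append split: if_splits)
  show "pending r p \<sigma> y t \<and> (\<forall>k<length S'. \<not> pending r p \<sigma>' (S' ! k) t)"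
  proof (intro conjI allI impI)
    fix k' assume "k' < length S'"
    then have "S' ! k' \<noteq> y" "S' ! k' = (S'@[y]) ! k'" using assms(2) nth_mem
      by (fastforce simp: nth_append)+
    then show "\<not> pending r p \<sigma>' (S' ! k') t" using k(4) kl \<open>k' < length S'\<close> assms(1) by metis
  qed (rule k(3))
next
  assume a: "pending r p \<sigma> y t \<and> (\<forall>k<length S'. \<not> pending r p \<sigma>' (S' ! k) t)"
  have "\<forall>k'<length S'. \<not> pending r p \<sigma> ((S'@[y]) ! k') t"
  proof (intro allI impI)
    fix k' assume "k' < length S'"
    then have "S' ! k' \<noteq> y" "S' ! k' = (S'@[y]) ! k'" using assms(2) nth_mem
      by (fastforce simp: nth_append)+
    then show "\<not> pending r p \<sigma> ((S'@[y]) ! k') t" using a \<open>k' < length S'\<close> assms(1) by metis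
  qed
  then show "first_pending (S'@[y]) r p \<sigma> y t" unfolding first_pending_def
    using a by (auto intro!: exI[of _ "length S'"])
qed

lemma pri_ok_facts:
  assumes "pri_ok S r p \<sigma>"
  shows "0 \<le> \<sigma> i t" "\<sigma> i t \<le> 1" "t < r i \<Longrightarrow> \<sigma> i t = 0"
    "\<not> pending r p \<sigma> i t \<Longrightarrow> \<sigma> i t = 0" "\<sigma> i integrable_on {a..b}"
    "first_pending S r p \<sigma> i t \<Longrightarrow> \<sigma> i t = 1"
  using assms unfolding pri_ok_def first_pending_def pending_def
  by (metis order.refl zero_le_one not_le)+

lemma work_upd_other: "j \<noteq> y \<Longrightarrow> pending r p (\<sigma>'(y := g)) j t = pending r p \<sigma>' j t"
  by (simp add: pending_def work_def)

lemma pri_step: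
  assumes ok: "pri_ok S' r p \<sigma>'" and y: "y \<notin> set S'"
  shows "\<exists>\<sigma>. pri_ok (S'@[y]) r p \<sigma>"
proof -
  define P where "P j = {t. pending r p \<sigma>' j t}" for j
  define E where "E = {t. \<forall>k<length S'. \<not> pending r p \<sigma>' (S' ! k) t}"
  define \<Phi> where "\<Phi> t = integral {r y..t} (indicator E :: real \<Rightarrow> real)" for t
  define K where "K = {t. r y \<le> t \<and> \<Phi> t < p y}"
  define g where "g = (indicator (E \<inter> K) :: real \<Rightarrow> real)"
  define \<sigma> where "\<sigma> = \<sigma>'(y := g)"
  have Pint: "is_interval (P j)" for j
    unfolding is_interval_1
  proof (intro ballI allI impI)
    fix a b x assume ab: "a \<in> P j" "b \<in> P j" "a \<le> x \<and> x \<le> b"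
    have "work r \<sigma>' j x \<le> work r \<sigma>' j b" unfolding work_def
      by (rule int_mono[of "r j"]) (use pri_ok_facts[OF ok] ab in auto)
    then show "x \<in> P j" using ab unfolding P_def pending_def by auto
  qed
  have Eeq: "E = UNIV - (\<Union>k\<in>{..<length S'}. P (S' ! k))"
    unfolding E_def P_def by auto
  have Eb: "E \<in> sets borel" unfolding Eeq
    using real_interval_borel_measurable[OF Pint] by auto
  have Ei: "(indicator E :: real \<Rightarrow> real) integrable_on {a..b}" for a b
    by (rule borel_indicator_integrable[OF Eb])
  have Phimono: "u \<le> t \<Longrightarrow> \<Phi> u \<le> \<Phi> t" for u t
    unfolding \<Phi>_def by (rule int_mono_gen) (use Ei in auto)
  have Kint: "is_interval K" unfolding is_interval_1
  proof (intro ballI allI impI)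
    fix a b x assume ab: "a \<in> K" "b \<in> K" "a \<le> x \<and> x \<le> b"
    have "\<Phi> x \<le> \<Phi> b" using Phimono ab by simp
    then show "x \<in> K" using ab unfolding K_def by auto
  qed
  have gi: "g integrable_on {a..b}" for a b
    unfolding g_def using Eb real_interval_borel_measurable[OF Kint]
    by (intro borel_indicator_integrable) auto
  have gn: "0 \<le> g x" for x unfolding g_def by simp
  have Phicont: "continuous_on {r y..t} \<Phi>" for t
    unfolding \<Phi>_def by (rule indefinite_integral_continuous_1[OF Ei])
  have case1: "integral {r y..t} g = \<Phi> t" if "\<Phi> t < p y" for t
  proof -
    have "integral {r y..t} g = integral {r y..t} (indicator E :: real \<Rightarrow> real)"
    proof (rule integral_spike[of "{}"])
      fix x assume "x \<in> {r y..t} - {}"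
      then have "x \<in> K" using Phimono[of x t] that unfolding K_def by auto
      then show "indicator E x = g x" unfolding g_def by (simp add: indicator_def)
    qed simp
    then show ?thesis unfolding \<Phi>_def by simp
  qed
  have key: "integral {r y..t} g < p y \<longleftrightarrow> \<Phi> t < p y" if "r y \<le> t" for t
  proof
    assume "\<Phi> t < p y" then show "integral {r y..t} g < p y" using case1 by simp
  next
    assume lt: "integral {r y..t} g < p y"
    show "\<Phi> t < p y"
    proof (rule ccontr)
      assume "\<not> \<Phi> t < p y"
      define c where "c = (integral {r y..t} g + p y) / 2"
      have g0: "0 \<le> integral {r y..t} g" by (rule int_nonneg) (use gn gi in auto)
      have "\<Phi> (r y) = 0" unfolding \<Phi>_def by simp
      then obtain s where s: "r y \<le> s" "s \<le> t" "\<Phi> s = c"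
        using IVT'[of \<Phi> "r y" c t] Phicont[of t] \<open>r y \<le> t\<close> g0 lt \<open>\<not> \<Phi> t < p y\<close>
        unfolding c_def by force
      have "c < p y" using lt unfolding c_def by simp
      then have "integral {r y..s} g = c" using case1[of s] s by simp
      moreover have "integral {r y..s} g \<le> integral {r y..t} g"
        by (rule int_mono_gen) (use gn gi s in auto)
      ultimately show False using lt unfolding c_def by simp
    qed
  qed
  have pend_other: "\<forall>j. j \<noteq> y \<longrightarrow> pending r p \<sigma> j t = pending r p \<sigma>' j t" for t
    unfolding \<sigma>_def using work_upd_other by metis
  have pend_y: "pending r p \<sigma> y t \<longleftrightarrow> r y \<le> t \<and> \<Phi> t < p y" for t
    using key unfolding pending_def work_def \<sigma>_def by auto
  have "pri_ok (S'@[y]) r p \<sigma>"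
    unfolding pri_ok_def
  proof (intro conjI allI)
    fix i t
    show "\<sigma> i t = (if first_pending (S' @ [y]) r p \<sigma> i t then 1 else 0)"
    proof (cases "i = y")
      case True
      have "first_pending (S' @ [y]) r p \<sigma> i t = (t \<in> E \<and> t \<in> K)"
        using fp_snoc_last[OF pend_other y, of t] True pend_y unfolding E_def K_def by auto
      then show ?thesis using True unfolding \<sigma>_def g_def by (simp add: indicator_def)
    next
      case False
      then show ?thesis using fp_snoc_other[OF False pend_other y, of t] ok
        unfolding \<sigma>_def pri_ok_def by simp
    qed
  next
    fix i a b show "\<sigma> i integrable_on {a..b}"
      using gi pri_ok_facts(5)[OF ok] unfolding \<sigma>_def by (cases "i = y") auto
  qed
  then show ?thesis by blast
qed

lemma pri_exists: "distinct S \<Longrightarrow> \<exists>\<sigma>. pri_ok S r p \<sigma>"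
proof (induction S rule: rev_induct)
  case Nil
  have "pri_ok [] r p (\<lambda>_ _. 0)" unfolding pri_ok_def first_pending_def by auto
  then show ?case by blast
next
  case (snoc y S')
  then obtain \<sigma>' where "pri_ok S' r p \<sigma>'" by auto
  then show ?case using pri_step snoc.prems by auto
qed

lemma fp_unique:
  assumes "distinct S" "first_pending S r p \<sigma> i t" "first_pending S r p \<sigma> j t"
  shows "i = j"
proof -
  obtain k where k: "k < length S" "S ! k = i" "pending r p \<sigma> i t"
     "\<forall>k'<k. \<not> pending r p \<sigma> (S ! k') t" using assms(2) unfolding first_pending_def by blast
  obtain l where l: "l < length S" "S ! l = j" "pending r p \<sigma> j t"
     "\<forall>k'<l. \<not> pending r p \<sigma> (S ! k') t" using assms(3) unfolding first_pending_def by blast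
  have "k = l" using k l by (metis linorder_neqE_nat)
  then show ?thesis using k l by simp
qed

lemma pri_is_Pri:
  assumes "finite J" "distinct S" "set S = J" "pri_ok S r p \<sigma>"
  shows "is_Pri J S r p \<sigma>"
proof -
  have sum: "(\<Sum>i\<in>J. \<sigma> i t) \<le> 1" for t
  proof (cases "\<exists>i\<in>J. first_pending S r p \<sigma> i t")
    case True
    then obtain i0 where i0: "i0 \<in> J" "first_pending S r p \<sigma> i0 t" by blast
    have "(\<Sum>i\<in>J. \<sigma> i t) = (\<Sum>i\<in>J. if i = i0 then 1 else 0)"
    proof (rule sum.cong)
      fix i assume "i \<in> J"
      show "\<sigma> i t = (if i = i0 then 1 else 0)"
        using assms(4) fp_unique[OF assms(2) i0(2)] i0 unfolding pri_ok_def by metis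
    qed simp
    also have "\<dots> = 1" using i0 assms(1) by simp
    finally show ?thesis by simp
  next
    case False
    then have "(\<Sum>i\<in>J. \<sigma> i t) = 0" using assms(4) unfolding pri_ok_def
      by (intro sum.neutral) auto
    then show ?thesis by simp
  qed
  show ?thesis unfolding is_Pri_def is_schedule_def
    using pri_ok_facts[OF assms(4)] sum assms(4) unfolding pri_ok_def by blast
qed

lemma sched_facts:
  assumes "is_schedule J r w" "j \<in> J"
  shows "\<And>x. x < r j \<Longrightarrow> w j x = 0" "\<And>a b. w j integrable_on {a..b}" "\<And>x. 0 \<le> w j x"
  using assms unfolding is_schedule_def by auto

lemma pri_notpending:
  assumes "is_Pri J S r p \<sigma>" "\<not> pending r p \<sigma> j t"
  shows "\<sigma> j t = 0"
  using assms unfolding is_Pri_def first_pending_def by auto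

lemma work_le_p:
  assumes pri: "is_Pri J S r p \<sigma>" and j: "j \<in> J" and pp: "0 < p j"
  shows "work r \<sigma> j t \<le> p j"
proof (rule ccontr)
  assume gt: "\<not> work r \<sigma> j t \<le> p j"
  have sch: "is_schedule J r \<sigma>" using pri unfolding is_Pri_def by simp
  note sf = sched_facts[OF sch j]
  have w0: "work r \<sigma> j (r j) = 0" unfolding work_def by simp
  have pos: "0 \<le> work r \<sigma> j t" unfolding work_def by (rule int_nonneg) (use sf in auto)
  have pj: "0 \<le> p j" using pp by simp
  have "r j \<le> t"
  proof (rule ccontr)
    assume "\<not> r j \<le> t" then have "work r \<sigma> j t = 0" unfolding work_def by (simp add: int_empty)
    then show False using gt pj by simp
  qed
  have cont: "continuous_on {r j..t} (work r \<sigma> j)" unfolding work_def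
    by (rule int_cont[of "r j"]) (use sf in auto)
  obtain s where s: "r j \<le> s" "s \<le> t" "work r \<sigma> j s = p j"
    using IVT'[of "work r \<sigma> j" "r j" "p j" t] cont w0 pj gt \<open>r j \<le> t\<close> by force
  have "integral {s..t} (\<sigma> j) = integral {s..t} (\<lambda>_. 0)"
  proof (rule integral_spike[of "{s}"])
    fix x assume x: "x \<in> {s..t} - {s}"
    have "work r \<sigma> j s \<le> work r \<sigma> j x" unfolding work_def
      by (rule int_mono[of "r j"]) (use sf x in auto)
    then have "\<not> pending r p \<sigma> j x" using s unfolding pending_def by simp
    then show "0 = \<sigma> j x" using pri_notpending[OF pri] by simp
  qed simp
  moreover have "work r \<sigma> j t - work r \<sigma> j s = integral {s..t} (\<sigma> j)" unfolding work_def
    by (rule int_diff[of "r j"]) (use sf s in auto)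
  ultimately show False using gt s by simp
qed

lemma int_lower:
  fixes f :: "real \<Rightarrow> real"
  assumes i: "f integrable_on {u..t}" and "u \<le> t" and c: "\<And>x. u < x \<Longrightarrow> x \<le> t \<Longrightarrow> 1 \<le> f x"
  shows "t - u \<le> integral {u..t} f"
proof -
  define h where "h x = (if x = u then 1 else f x)" for x
  have e: "integral {u..t} f = integral {u..t} h"
    by (rule integral_spike[of "{u}"]) (auto simp: h_def)
  have hi: "h integrable_on {u..t}"
    by (rule integrable_spike[of f _ "{u}"]) (use i in \<open>auto simp: h_def\<close>)
  have "integral {u..t} (\<lambda>_. 1::real) \<le> integral {u..t} h"
    by (rule integral_le) (use hi c in \<open>auto simp: h_def\<close>)
  then show ?thesis using e \<open>u \<le> t\<close> by simp
qed

lemma dom_sum: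
  assumes fin: "finite J" and dist: "distinct S" and setS: "set S = J" and r0: "\<forall>i\<in>J. 0 \<le> r i"
   and ws: "is_schedule J r w" and pri: "is_Pri J S r p \<sigma>" and kS: "k < length S"
  shows "(\<Sum>j\<in>set (take (Suc k) S). min (p j) (work r w j t))
         \<le> (\<Sum>j\<in>set (take (Suc k) S). work r \<sigma> j t)"
proof (rule ccontr)
  define A where "A = set (take (Suc k) S)"
  have AJ: "A \<subseteq> J" unfolding A_def using set_take_subset[of "Suc k" S] setS by simp
  have fA: "finite A" unfolding A_def by simp
  have sch: "is_schedule J r \<sigma>" using pri unfolding is_Pri_def by simp
  have eq: "\<sigma> i x = (if first_pending S r p \<sigma> i x then 1 else 0)" for i x
    using pri unfolding is_Pri_def by simp
  define F where "F s = (\<Sum>j\<in>A. work r \<sigma> j s)" for s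
  define G where "G s = (\<Sum>j\<in>A. min (p j) (work r w j s))" for s
  define H where "H s = F s - G s" for s
  assume "\<not> (\<Sum>j\<in>set (take (Suc k) S). min (p j) (work r w j t))
         \<le> (\<Sum>j\<in>set (take (Suc k) S). work r \<sigma> j t)"
  then have Ht: "H t < 0" unfolding H_def F_def G_def A_def by simp
  define m where "m = min t 0"
  have mr: "j \<in> A \<Longrightarrow> m \<le> r j" for j using r0 AJ unfolding m_def by force
  have cont: "continuous_on {m..t} H"
    unfolding H_def F_def G_def
  proof (intro continuous_intros)
    fix j assume "j \<in> A"
    then have j: "j \<in> J" "m \<le> r j" using AJ mr by auto
    show "continuous_on {m..t} (work r \<sigma> j)" unfolding work_def
      by (rule int_cont) (use sched_facts[OF sch j(1)] j in auto)
    show "continuous_on {m..t} (work r w j)" unfolding work_def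
      by (rule int_cont) (use sched_facts[OF ws j(1)] j in auto)
  qed
  define S0 where "S0 = {m..t} \<inter> H -` {0..}"
  have cS0: "closed S0" unfolding S0_def by (rule continuous_closed_preimage[OF cont]) auto
  have Hm: "0 \<le> H m"
  proof -
    have "work r \<sigma> j m = 0" "work r w j m = 0" if "j \<in> A" for j
      using mr[OF that] int_empty unfolding work_def by auto
    then show ?thesis unfolding H_def F_def G_def
      by (simp add: sum_nonpos)
  qed
  have mS0: "m \<in> S0" unfolding S0_def m_def using Hm m_def by auto
  have bS0: "bdd_above S0" unfolding S0_def by (rule bdd_aboveI[of _ t]) auto
  define u where "u = Sup S0"
  have uS0: "u \<in> S0" unfolding u_def using closed_contains_Sup[OF _ bS0 cS0] mS0 by auto
  then have u: "m \<le> u" "u \<le> t" "0 \<le> H u" unfolding S0_def by auto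
  have ut: "u < t" using u Ht by (metis order_le_less not_le)
  have neg: "H s < 0" if "u < s" "s \<le> t" for s
  proof (rule ccontr)
    assume "\<not> H s < 0"
    then have "s \<in> S0" unfolding S0_def using that u by auto
    then have "s \<le> u" unfolding u_def using bS0 by (rule cSup_upper)
    then show False using that by simp
  qed
  have busy: "1 \<le> (\<Sum>j\<in>A. \<sigma> j s)" if s: "u < s" "s \<le> t" for s
  proof -
    have "\<exists>j\<in>A. work r \<sigma> j s < min (p j) (work r w j s)"
    proof (rule ccontr)
      assume "\<not> ?thesis"
      then have "G s \<le> F s" unfolding G_def F_def by (intro sum_mono) (auto simp: not_less)
      then show False using neg[OF s] unfolding H_def by simp
    qed
    then obtain j where j: "j \<in> A" "work r \<sigma> j s < min (p j) (work r w j s)" by blast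
    have jJ: "j \<in> J" using j AJ by auto
    have pos: "0 \<le> work r \<sigma> j s" unfolding work_def
      by (rule int_nonneg) (use sched_facts[OF sch jJ] in auto)
    have "r j \<le> s"
    proof (rule ccontr)
      assume "\<not> r j \<le> s"
      then have "work r w j s = 0" unfolding work_def by (simp add: int_empty)
      then show False using j pos by simp
    qed
    then have pj: "pending r p \<sigma> j s" unfolding pending_def using j by simp
    obtain a where a: "a < Suc k" "S ! a = j" using j(1) kS unfolding A_def
      by (auto simp: in_set_conv_nth)
    define k0 where "k0 = (LEAST a. a < length S \<and> pending r p \<sigma> (S ! a) s)"
    have ex: "a < length S \<and> pending r p \<sigma> (S ! a) s" using a pj kS by simp
    have k0: "k0 < length S" "pending r p \<sigma> (S ! k0) s" "k0 \<le> a"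
      using LeastI[where P="\<lambda>a. a < length S \<and> pending r p \<sigma> (S ! a) s", OF ex]
        Least_le[where P="\<lambda>a. a < length S \<and> pending r p \<sigma> (S ! a) s", OF ex] unfolding k0_def by auto
    have nl: "\<And>k'. k' < k0 \<Longrightarrow> \<not> (k' < length S \<and> pending r p \<sigma> (S ! k') s)"
      unfolding k0_def by (rule not_less_Least)
    have "\<not> pending r p \<sigma> (S ! k') s" if "k' < k0" for k'
      using nl[OF that] that k0(1) by linarith
    then have "first_pending S r p \<sigma> (S ! k0) s" unfolding first_pending_def using k0(1,2) by blast
    then have one: "\<sigma> (S ! k0) s = 1" using eq[of "S ! k0" s] by simp
    have k0k: "k0 < Suc k" using k0(3) a(1) by linarith
    have tk: "take (Suc k) S ! k0 = S ! k0" using k0k by (rule nth_take)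
    have lk: "k0 < length (take (Suc k) S)" using k0k k0(1) by simp
    have inA: "S ! k0 \<in> A" unfolding A_def using nth_mem[OF lk] tk by simp
    have "\<sigma> (S ! k0) s \<le> (\<Sum>j\<in>A. \<sigma> j s)"
      by (rule member_le_sum) (use inA fA sched_facts[OF sch] AJ in auto)
    then show ?thesis using one by simp
  qed
  have int_s: "\<And>j. j \<in> A \<Longrightarrow> \<sigma> j integrable_on {u..t}"
    using sched_facts[OF sch] AJ by auto
  have int_w: "\<And>j. j \<in> A \<Longrightarrow> w j integrable_on {u..t}"
    using sched_facts[OF ws] AJ by auto
  have "F t - F u = (\<Sum>j\<in>A. work r \<sigma> j t - work r \<sigma> j u)"
    unfolding F_def by (simp add: sum_subtractf)
  also have "\<dots> = (\<Sum>j\<in>A. integral {u..t} (\<sigma> j))"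
  proof (rule sum.cong)
    fix j assume "j \<in> A" then have jJ: "j \<in> J" using AJ by auto
    show "work r \<sigma> j t - work r \<sigma> j u = integral {u..t} (\<sigma> j)" unfolding work_def
      by (rule int_diff) (use sched_facts[OF sch jJ] u in auto)
  qed simp
  also have "\<dots> = integral {u..t} (\<lambda>s. \<Sum>j\<in>A. \<sigma> j s)"
    by (rule integral_sum[symmetric]) (use fA int_s in auto)
  finally have Fd: "F t - F u = integral {u..t} (\<lambda>s. \<Sum>j\<in>A. \<sigma> j s)" .
  have Fl: "t - u \<le> F t - F u" unfolding Fd
    by (rule int_lower) (use busy u integrable_sum[OF fA int_s] in auto)
  have "G t - G u \<le> (\<Sum>j\<in>A. work r w j t - work r w j u)"
    unfolding G_def sum_subtractf[symmetric]
  proof (rule sum_mono)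
    fix j assume "j \<in> A" then have jJ: "j \<in> J" using AJ by auto
    have "work r w j u \<le> work r w j t" unfolding work_def
      by (rule int_mono) (use sched_facts[OF ws jJ] u in auto)
    then show "min (p j) (work r w j t) - min (p j) (work r w j u) \<le> work r w j t - work r w j u"
      by linarith
  qed
  also have "\<dots> = (\<Sum>j\<in>A. integral {u..t} (w j))"
  proof (rule sum.cong)
    fix j assume "j \<in> A" then have jJ: "j \<in> J" using AJ by auto
    show "work r w j t - work r w j u = integral {u..t} (w j)" unfolding work_def
      by (rule int_diff) (use sched_facts[OF ws jJ] u in auto)
  qed simp
  also have "\<dots> = integral {u..t} (\<lambda>s. \<Sum>j\<in>A. w j s)"
    by (rule integral_sum[symmetric]) (use fA int_w in auto)
  also have "\<dots> \<le> integral {u..t} (\<lambda>s. 1)"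
  proof (rule integral_le)
    show "(\<lambda>s. \<Sum>j\<in>A. w j s) integrable_on {u..t}" using integrable_sum[OF fA int_w] by simp
    show "(\<lambda>s. 1::real) integrable_on {u..t}" by (rule integrable_const_ivl)
    fix s assume "s \<in> {u..t}"
    have "(\<Sum>j\<in>A. w j s) \<le> (\<Sum>j\<in>J. w j s)"
      by (rule sum_mono2[OF fin AJ]) (use sched_facts[OF ws] in auto)
    also have "\<dots> \<le> 1" using ws unfolding is_schedule_def by auto
    finally show "(\<Sum>j\<in>A. w j s) \<le> 1" .
  qed
  also have "\<dots> = t - u" using u by simp
  finally have Gl: "G t - G u \<le> t - u" .
  show False using Fl Gl u(3) Ht unfolding H_def by linarith
qed

theorem mainTheorem1:
  fixes J :: "'a set" and S :: "'a list" and r p :: "'a \<Rightarrow> real"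
    and w :: "'a \<Rightarrow> real \<Rightarrow> real"
  assumes "finite J"
    and "distinct S" and "set S = J"
    and "\<forall>i\<in>J. 0 \<le> r i" and "\<forall>i\<in>J. 0 < p i"
    and "is_schedule J r w"
    and "\<forall>i\<in>J. completes r p w i"
    and "has_completion_sequence S r p w"
  shows "(\<exists>\<sigma>. is_Pri J S r p \<sigma>) \<and>
         (\<forall>\<sigma>. is_Pri J S r p \<sigma> \<longrightarrow>
            (\<forall>i\<in>J. completes r p \<sigma> i \<and>
                     completion_time r p \<sigma> i \<le> completion_time r p w i))"
proof (intro conjI allI impI ballI)
  show "\<exists>\<sigma>. is_Pri J S r p \<sigma>"
    using pri_exists[OF assms(2)] pri_is_Pri[OF assms(1-3)] by blast
next
  fix \<sigma> i assume pri: "is_Pri J S r p \<sigma>" and iJ: "i \<in> J"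
  have sch: "is_schedule J r \<sigma>" using pri unfolding is_Pri_def by simp
  obtain k where k: "k < length S" "S ! k = i" using iJ assms(3) by (auto simp: in_set_conv_nth)
  define A where "A = set (take (Suc k) S)"
  have AJ: "A \<subseteq> J" unfolding A_def using set_take_subset[of "Suc k" S] assms(3) by simp
  have fA: "finite A" unfolding A_def by simp
  have iA: "i \<in> A" unfolding A_def using k
    by (metis in_set_conv_nth length_take lessI min_less_iff_conj nth_take)
  define Z where "Z \<omega> j = {t. r j \<le> t \<and> work r \<omega> j t = p j}" for \<omega> j
  define T where "T = completion_time r p w i"
  have Zne: "Z w j \<noteq> {}" if "j \<in> J" for j
    using assms(7) that unfolding Z_def completes_def by auto
  have Zbdd: "bdd_below (Z \<omega> j)" for \<omega> j unfolding Z_def by (rule bdd_belowI[of _ "r j"]) auto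
  have ct: "completion_time r p \<omega> j = Inf (Z \<omega> j)" for \<omega> j
    unfolding completion_time_def Z_def by simp
  have CA: "completion_time r p w j \<le> T" if jA: "j \<in> A" for j
  proof -
    obtain a where a: "a < Suc k" "S ! a = j" using jA k(1) unfolding A_def
      by (auto simp: in_set_conv_nth)
    show ?thesis
    proof (cases "a = k")
      case True then show ?thesis using a k unfolding T_def by simp
    next
      case False
      then show ?thesis using a k assms(8) unfolding T_def has_completion_sequence_def by auto
    qed
  qed
  have rT: "r i \<le> T" unfolding T_def ct using Zne[OF iJ]
    by (intro cInf_greatest) (auto simp: Z_def)
  have main: "work r \<sigma> i (T + e) = p i" if e: "0 < e" for e
  proof -
    have full: "min (p j) (work r w j (T + e)) = p j" if "j \<in> A" for j
    proof -
      have jJ: "j \<in> J" using that AJ by auto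
      have "Inf (Z w j) < T + e" using CA[OF that] e unfolding ct by simp
      then obtain z where z: "z \<in> Z w j" "z < T + e"
        using cInf_less_iff[OF Zne[OF jJ] Zbdd] by blast
      have "work r w j z \<le> work r w j (T + e)" unfolding work_def
        by (rule int_mono) (use sched_facts[OF assms(6) jJ] z in auto)
      then show ?thesis using z unfolding Z_def by simp
    qed
    have "(\<Sum>j\<in>A. p j) \<le> (\<Sum>j\<in>A. work r \<sigma> j (T + e))"
      using dom_sum[OF assms(1-4,6) pri k(1), of "T + e"] full unfolding A_def by simp
    moreover have le: "\<forall>j\<in>A. work r \<sigma> j (T + e) \<le> p j"
      using work_le_p[OF pri] assms(5) AJ by blast
    show ?thesis
    proof (rule ccontr)
      assume "work r \<sigma> i (T + e) \<noteq> p i"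
      then have "work r \<sigma> i (T + e) < p i" using le iA by force
      then have "(\<Sum>j\<in>A. work r \<sigma> j (T + e)) < (\<Sum>j\<in>A. p j)"
        by (intro sum_strict_mono_ex1[OF fA le]) (use iA in blast)
      then show False using calculation by simp
    qed
  qed
  have mem: "T + e \<in> Z \<sigma> i" if "0 < e" for e
    using main[OF that] rT that unfolding Z_def by simp
  show "completes r p \<sigma> i" using mem[of 1] unfolding completes_def Z_def by auto
  have "completion_time r p \<sigma> i \<le> T + e" if "0 < e" for e
    unfolding ct by (rule cInf_lower[OF mem[OF that] Zbdd])
  then show "completion_time r p \<sigma> i \<le> completion_time r p w i"
    unfolding T_def[symmetric] by (rule field_le_epsilon)
qed

end
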